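(* On the domain $B>0$, $\mathrm{FOV}\in(0,\pi/2]$, both $L_{\mathrm{ADR}}(B,\mathrm{FOV})$ and $A_{\mathrm{ADR}}(B,\mathrm{FOV})$ are strictly decreasing in $B$ (for fixed $\mathrm{FOV}$) and strictly decreasing in $\mathrm{FOV}$ (for fixed $B$).
   Context: Fix constants: an integer $N_{\mathrm{tier}}\ge1$; an integer $N_{\mathrm{PD}}\ge 1$; $\mathrm{FF}\in(0,1]$; $K_{\mathrm{PD}}>0$; $n_{\mathrm{CPC}}\ge 1$. The design variables are $B>0$ and $\mathrm{FOV}\in(0,\pi/2]$. Write $\theta=\theta_{\mathrm{CPC}}=\mathrm{FOV}/(2N_{\mathrm{tier}}+1)$. Set $K_1=\frac{1}{2K_{\mathrm{PD}}}\sqrt{N_{\mathrm{PD}}/\mathrm{FF}}$ and $K_2=\frac{\pi N_{\mathrm{PD}}n_{\mathrm{CPC}}^2}{4\,\mathrm{FF}\,K_{\mathrm{PD}}^2}$, and define the receiver height and top area $L_{\mathrm{ADR}}(B,\mathrm{FOV})=\frac{K_1}{B}\cdot\frac{n_{\mathrm{CPC}}+\sin\theta}{\sin\theta\,\tan\theta}$, $A_{\mathrm{ADR}}(B,\mathrm{FOV})=\frac{K_2}{B^2\sin^2\theta}\Big(1+\sum_{i=1}^{N_{\mathrm{tier}}}6i\cos(2i\theta)\Big)$. *)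

theory Defs
  imports Complex_Main
begin

definition theta_CPC :: "nat \<Rightarrow> real \<Rightarrow> real" where
  "theta_CPC Ntier FOV = FOV / (2 * real Ntier + 1)"

definition K1 :: "nat \<Rightarrow> real \<Rightarrow> real \<Rightarrow> real" where
  "K1 NPD FF KPD = (1 / (2 * KPD)) * sqrt (real NPD / FF)"

definition K2 :: "nat \<Rightarrow> real \<Rightarrow> real \<Rightarrow> real \<Rightarrow> real" where
  "K2 NPD FF KPD nCPC = (pi * real NPD * nCPC^2) / (4 * FF * KPD^2)"

definition L_ADR :: "nat \<Rightarrow> nat \<Rightarrow> real \<Rightarrow> real \<Rightarrow> real \<Rightarrow> real \<Rightarrow> real \<Rightarrow> real" where
  "L_ADR Ntier NPD FF KPD nCPC B FOV =
     (let \<theta> = theta_CPC Ntier FOV in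
      (K1 NPD FF KPD / B) * ((nCPC + sin \<theta>) / (sin \<theta> * tan \<theta>)))"

definition A_ADR :: "nat \<Rightarrow> nat \<Rightarrow> real \<Rightarrow> real \<Rightarrow> real \<Rightarrow> real \<Rightarrow> real \<Rightarrow> real" where
  "A_ADR Ntier NPD FF KPD nCPC B FOV =
     (let \<theta> = theta_CPC Ntier FOV in
      (K2 NPD FF KPD nCPC / (B^2 * (sin \<theta>)^2)) *
        (1 + (\<Sum>i=1..Ntier. 6 * real i * cos (2 * real i * \<theta>))))"

end

theory Submission
  imports Defs
begin

lemma th_bound:
  assumes "0 < FOV" "FOV \<le> pi/2" "i \<le> N"
  shows "0 < theta_CPC N FOV" "2 * real i * theta_CPC N FOV < pi/2"
proof -
  have d: "2 * real N + 1 > 0" by simp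
  show "0 < theta_CPC N FOV" using assms d unfolding theta_CPC_def by simp
  have "2 * real i * FOV \<le> 2 * real N * (pi/2)"
    using assms by (intro mult_mono) auto
  also have "\<dots> < (2 * real N + 1) * (pi/2)" using pi_gt_zero by (simp add: algebra_simps)
  finally have "2 * real i * FOV < (2 * real N + 1) * (pi/2)" .
  then show "2 * real i * theta_CPC N FOV < pi/2"
    unfolding theta_CPC_def using d by (simp add: field_simps)
qed

lemma th_pos: "0 < FOV \<Longrightarrow> 0 < theta_CPC N FOV"
  unfolding theta_CPC_def by (simp add: add_pos_nonneg)

lemma th_bound3:
  assumes "0 < FOV" "FOV \<le> pi/2" "1 \<le> N"
  shows "theta_CPC N FOV < pi/2"
proof -
  have "theta_CPC N FOV < FOV" unfolding theta_CPC_def using assms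
    by (simp add: field_simps)
  then show ?thesis using assms by simp
qed

lemma th_mono: "F1 < F2 \<Longrightarrow> theta_CPC N F1 < theta_CPC N F2"
  unfolding theta_CPC_def by (simp add: divide_strict_right_mono add_pos_nonneg)

definition S :: "nat \<Rightarrow> real \<Rightarrow> real" where
  "S N t = 1 + (\<Sum>i=1..N. 6 * real i * cos (2 * real i * t))"

lemma S_pos:
  assumes "0 < FOV" "FOV \<le> pi/2"
  shows "S N (theta_CPC N FOV) > 0"
proof -
  have "(\<Sum>i=1..N. 6 * real i * cos (2 * real i * theta_CPC N FOV)) \<ge> 0"
  proof (intro sum_nonneg)
    fix i assume "i \<in> {1..N}"
    then have iN: "i \<le> N" by simp
    have z: "0 \<le> 2 * real i * theta_CPC N FOV" using th_pos[of FOV N] assms by simp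
    from th_bound(2)[OF assms iN] z pi_gt_zero have "0 < cos (2 * real i * theta_CPC N FOV)"
      by (intro cos_gt_zero_pi) auto
    then show "0 \<le> 6 * real i * cos (2 * real i * theta_CPC N FOV)" by simp
  qed
  then show ?thesis unfolding S_def by simp
qed

lemma S_mono:
  assumes "0 < F1" "F1 < F2" "F2 \<le> pi/2"
  shows "S N (theta_CPC N F2) \<le> S N (theta_CPC N F1)"
proof -
  have "(\<Sum>i=1..N. 6 * real i * cos (2 * real i * theta_CPC N F2))
     \<le> (\<Sum>i=1..N. 6 * real i * cos (2 * real i * theta_CPC N F1))"
  proof (intro sum_mono)
    fix i assume "i \<in> {1..N}"
    then have i: "i \<le> N" by simp
    have p2: "2 * real i * theta_CPC N F2 < pi/2" using th_bound(2)[OF _ assms(3) i] assms by simp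
    have p1: "0 < theta_CPC N F1" using th_pos[of F1 N] assms by simp
    have m: "theta_CPC N F1 < theta_CPC N F2" using th_mono assms by blast
    have "2 * real i * theta_CPC N F1 \<le> 2 * real i * theta_CPC N F2"
      using m by (intro mult_left_mono) auto
    moreover have "0 \<le> 2 * real i * theta_CPC N F1" using p1 by simp
    moreover have "2 * real i * theta_CPC N F2 \<le> pi" using p2 pi_gt_zero by linarith
    ultimately have "cos (2 * real i * theta_CPC N F2) \<le> cos (2 * real i * theta_CPC N F1)"
      using cos_monotone_0_pi_le by blast
    then show "6 * real i * cos (2 * real i * theta_CPC N F2)
      \<le> 6 * real i * cos (2 * real i * theta_CPC N F1)" by (intro mult_left_mono) auto
  qed
  then show ?thesis unfolding S_def by simp
qed

lemma Lfac_mono: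
  fixes n a b :: real
  assumes "n \<ge> 1" "0 < a" "a < b" "b < pi/2"
  shows "(n + sin b) / (sin b * tan b) < (n + sin a) / (sin a * tan a)"
proof -
  have sa: "0 < sin a" using assms by (intro sin_gt_zero) auto
  have sb: "sin a < sin b" using assms by (intro sin_monotone_2pi) auto
  have ta: "0 < tan a" using assms by (intro tan_gt_zero) auto
  have tb: "tan a < tan b" using assms by (intro tan_monotone) auto
  have e: "\<And>s t. s > 0 \<Longrightarrow> t > 0 \<Longrightarrow> (n + s) / (s * t) = n / (s * t) + 1 / t"
    by (simp add: field_simps)
  have st: "sin a * tan a < sin b * tan b" using sa sb ta tb
    by (intro mult_strict_mono) auto
  have 1: "n / (sin b * tan b) < n / (sin a * tan a)"
    using st sa ta assms(1) mult_pos_pos[OF sa ta] mult_pos_pos[of "sin b" "tan b"] sb tb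
    by (intro divide_strict_left_mono) auto
  have 2: "1 / tan b < 1 / tan a" using ta tb by (intro divide_strict_left_mono) auto
  show ?thesis using e[of "sin a" "tan a"] e[of "sin b" "tan b"] sa sb ta tb 1 2 by simp
qed

theorem proposition2:
  fixes Ntier NPD :: nat and FF KPD nCPC :: real
  assumes "Ntier \<ge> 1" and "NPD \<ge> 1" and "0 < FF" and "FF \<le> 1"
    and "KPD > 0" and "nCPC \<ge> 1"
  shows "(\<forall>FOV B1 B2. 0 < FOV \<and> FOV \<le> pi/2 \<and> 0 < B1 \<and> B1 < B2 \<longrightarrow>
            L_ADR Ntier NPD FF KPD nCPC B2 FOV < L_ADR Ntier NPD FF KPD nCPC B1 FOV \<and>
            A_ADR Ntier NPD FF KPD nCPC B2 FOV < A_ADR Ntier NPD FF KPD nCPC B1 FOV)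
       \<and> (\<forall>B F1 F2. 0 < B \<and> 0 < F1 \<and> F1 < F2 \<and> F2 \<le> pi/2 \<longrightarrow>
            L_ADR Ntier NPD FF KPD nCPC B F2 < L_ADR Ntier NPD FF KPD nCPC B F1 \<and>
            A_ADR Ntier NPD FF KPD nCPC B F2 < A_ADR Ntier NPD FF KPD nCPC B F1)"
proof -
  have k1: "K1 NPD FF KPD > 0" unfolding K1_def using assms by simp
  have k2: "K2 NPD FF KPD nCPC > 0" unfolding K2_def using assms by simp
  have LA: "L_ADR Ntier NPD FF KPD nCPC B FOV = (K1 NPD FF KPD / B) *
     ((nCPC + sin (theta_CPC Ntier FOV)) / (sin (theta_CPC Ntier FOV) * tan (theta_CPC Ntier FOV)))"
    for B FOV unfolding L_ADR_def Let_def by simp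
  have AA: "A_ADR Ntier NPD FF KPD nCPC B FOV = (K2 NPD FF KPD nCPC / (B^2 * (sin (theta_CPC Ntier FOV))^2))
     * S Ntier (theta_CPC Ntier FOV)" for B FOV unfolding A_ADR_def Let_def S_def by simp
  have sinpos: "0 < sin (theta_CPC Ntier FOV)" "0 < tan (theta_CPC Ntier FOV)"
    if "0 < FOV" "FOV \<le> pi/2" for FOV
    using th_pos[of FOV Ntier] that th_bound3[OF that assms(1)]
    by (auto intro: sin_gt_zero tan_gt_zero)
  show ?thesis
  proof (intro conjI allI impI)
    fix FOV B1 B2 :: real
    assume h: "0 < FOV \<and> FOV \<le> pi / 2 \<and> 0 < B1 \<and> B1 < B2"
    note s = sinpos[of FOV]
    have X: "(nCPC + sin (theta_CPC Ntier FOV)) / (sin (theta_CPC Ntier FOV) * tan (theta_CPC Ntier FOV)) > 0"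
      using s h assms by (intro divide_pos_pos mult_pos_pos) auto
    have "K1 NPD FF KPD / B2 < K1 NPD FF KPD / B1"
      using h k1 by (intro divide_strict_left_mono) auto
    then show "L_ADR Ntier NPD FF KPD nCPC B2 FOV < L_ADR Ntier NPD FF KPD nCPC B1 FOV"
      unfolding LA using X by (intro mult_strict_right_mono) auto
    have Sp: "S Ntier (theta_CPC Ntier FOV) > 0" using S_pos h by blast
    have "B1^2 * (sin (theta_CPC Ntier FOV))^2 < B2^2 * (sin (theta_CPC Ntier FOV))^2"
      using h s by (intro mult_strict_right_mono power_strict_mono) auto
    then have "K2 NPD FF KPD nCPC / (B2^2 * (sin (theta_CPC Ntier FOV))^2)
        < K2 NPD FF KPD nCPC / (B1^2 * (sin (theta_CPC Ntier FOV))^2)"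
      using h s k2 by (intro divide_strict_left_mono) auto
    then show "A_ADR Ntier NPD FF KPD nCPC B2 FOV < A_ADR Ntier NPD FF KPD nCPC B1 FOV"
      unfolding AA using Sp by (intro mult_strict_right_mono) auto
  next
    fix B F1 F2 :: real
    assume h: "0 < B \<and> 0 < F1 \<and> F1 < F2 \<and> F2 \<le> pi / 2"
    have t1: "0 < theta_CPC Ntier F1" using th_pos[of F1 Ntier] h by simp
    have t2: "theta_CPC Ntier F2 < pi/2" using th_bound3[of F2 Ntier] h assms(1) by simp
    have m: "theta_CPC Ntier F1 < theta_CPC Ntier F2" using th_mono h by blast
    have "(nCPC + sin (theta_CPC Ntier F2)) / (sin (theta_CPC Ntier F2) * tan (theta_CPC Ntier F2))
       < (nCPC + sin (theta_CPC Ntier F1)) / (sin (theta_CPC Ntier F1) * tan (theta_CPC Ntier F1))"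
      using Lfac_mono[OF assms(6) t1 m t2] .
    then show "L_ADR Ntier NPD FF KPD nCPC B F2 < L_ADR Ntier NPD FF KPD nCPC B F1"
      unfolding LA using k1 h by (intro mult_strict_left_mono) auto
    have s1: "0 < sin (theta_CPC Ntier F1)" using sinpos[of F1] h by auto
    have s12: "sin (theta_CPC Ntier F1) < sin (theta_CPC Ntier F2)"
      using t1 m t2 by (intro sin_monotone_2pi) auto
    have Sp: "S Ntier (theta_CPC Ntier F2) > 0" using S_pos h by auto
    have Sm: "S Ntier (theta_CPC Ntier F2) \<le> S Ntier (theta_CPC Ntier F1)" using S_mono h by auto
    have "B^2 * (sin (theta_CPC Ntier F1))^2 < B^2 * (sin (theta_CPC Ntier F2))^2"
      using h s1 s12 by (intro mult_strict_left_mono power_strict_mono) auto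
    then have c: "K2 NPD FF KPD nCPC / (B^2 * (sin (theta_CPC Ntier F2))^2)
        < K2 NPD FF KPD nCPC / (B^2 * (sin (theta_CPC Ntier F1))^2)"
      using h s1 s12 k2 by (intro divide_strict_left_mono) auto
    have c0: "0 < K2 NPD FF KPD nCPC / (B^2 * (sin (theta_CPC Ntier F1))^2)"
      using h s1 k2 by auto
    have "K2 NPD FF KPD nCPC / (B^2 * (sin (theta_CPC Ntier F2))^2) * S Ntier (theta_CPC Ntier F2)
      < K2 NPD FF KPD nCPC / (B^2 * (sin (theta_CPC Ntier F1))^2) * S Ntier (theta_CPC Ntier F2)"
      using c Sp by (intro mult_strict_right_mono) auto
    also have "\<dots> \<le> K2 NPD FF KPD nCPC / (B^2 * (sin (theta_CPC Ntier F1))^2) * S Ntier (theta_CPC Ntier F1)"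
      using c0 Sm by (intro mult_left_mono) auto
    finally show "A_ADR Ntier NPD FF KPD nCPC B F2 < A_ADR Ntier NPD FF KPD nCPC B F1"
      unfolding AA .
  qed
qed

end
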